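(* Let $E$ be a Dedekind complete Riesz space with conditional expectation operator $T$, weak order unit $e$ with $Te=e$, and a filtration $(T_i)_{i\ge0}$ compatible with $T$. Let $(f_i)_{i\in\mathbb{N}}$ be a sequence in $E$ adapted to $(T_i)$ (i.e. $f_i\in\mathcal{R}(T_i)$) which is $e$-uniformly bounded, i.e. there is $B>0$ with $|f_i|\le Be$ for all $i$. Put $g_i:=f_i-T_{i-1}f_i$. Then $(g_i,T_i)$ is a martingale difference sequence (i.e. $g_i\in\mathcal{R}(T_i)$ and $T_ig_{i+1}=0$ for all $i$), and $$T\Big|\frac1n\sum_{i=1}^n g_i\Big|\to0\quad\text{(in order) as } n\to\infty.$$
   Context: A conditional expectation operator on a Dedekind complete Riesz space $E$ with a weak order unit is a positive, order continuous linear projection $T:E\to E$ which maps weak order units to weak order units and whose range $\mathcal{R}(T)$ is a Dedekind complete Riesz subspace of $E$. A filtration is a sequence $(T_i)$ of conditional expectations with $T_iT_j=T_i=T_jT_i$ for $i\le j$; it is compatible with $T$ if $T_iT=T=TT_i$ for all $i$. *)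

theory Defs
  imports Complex_Main
begin

text \<open>A Dedekind complete Riesz space is modelled as a type of class
  ordered_real_vector (ordered real vector space) whose order is a
  conditionally complete lattice (every nonempty set bounded above has a supremum).\<close>

definition riesz_abs :: "'a::{ordered_real_vector, lattice} \<Rightarrow> 'a" where
  "riesz_abs x = sup x (- x)"

definition weak_order_unit :: "'a::{ordered_real_vector, lattice} \<Rightarrow> bool" where
  "weak_order_unit e \<longleftrightarrow> 0 \<le> e \<and> (\<forall>x. inf (riesz_abs x) e = 0 \<longrightarrow> x = 0)"

definition positive_op :: "('a::ordered_real_vector \<Rightarrow> 'a) \<Rightarrow> bool" where
  "positive_op T \<longleftrightarrow> (\<forall>x. 0 \<le> x \<longrightarrow> 0 \<le> T x)"

definition order_continuous :: "('a::{ordered_real_vector, conditionally_complete_lattice} \<Rightarrow> 'a) \<Rightarrow> bool" where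
  "order_continuous T \<longleftrightarrow>
     (\<forall>D. D \<noteq> {} \<and> (\<forall>x\<in>D. \<forall>y\<in>D. \<exists>z\<in>D. z \<le> x \<and> z \<le> y) \<and> (\<forall>x\<in>D. 0 \<le> x) \<and> Inf D = 0
          \<longrightarrow> Inf (T ` D) = 0)"

definition riesz_subspace :: "'a::{ordered_real_vector, lattice} set \<Rightarrow> bool" where
  "riesz_subspace S \<longleftrightarrow> 0 \<in> S \<and> (\<forall>x\<in>S. \<forall>y\<in>S. x + y \<in> S) \<and> (\<forall>x\<in>S. \<forall>c. c *\<^sub>R x \<in> S)
     \<and> (\<forall>x\<in>S. \<forall>y\<in>S. sup x y \<in> S \<and> inf x y \<in> S)"

definition dedekind_complete_riesz_subspace :: "'a::{ordered_real_vector, lattice} set \<Rightarrow> bool" where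
  "dedekind_complete_riesz_subspace S \<longleftrightarrow> riesz_subspace S \<and>
     (\<forall>A. A \<subseteq> S \<and> A \<noteq> {} \<and> (\<exists>u\<in>S. \<forall>a\<in>A. a \<le> u) \<longrightarrow>
        (\<exists>s\<in>S. (\<forall>a\<in>A. a \<le> s) \<and> (\<forall>u\<in>S. (\<forall>a\<in>A. a \<le> u) \<longrightarrow> s \<le> u)))"

definition cond_expectation :: "('a::{ordered_real_vector, conditionally_complete_lattice} \<Rightarrow> 'a) \<Rightarrow> bool" where
  "cond_expectation T \<longleftrightarrow> linear T \<and> positive_op T \<and> order_continuous T \<and> T \<circ> T = T
     \<and> (\<forall>w. weak_order_unit w \<longrightarrow> weak_order_unit (T w))
     \<and> dedekind_complete_riesz_subspace (range T)"

definition filtration :: "(nat \<Rightarrow> 'a::{ordered_real_vector, conditionally_complete_lattice} \<Rightarrow> 'a) \<Rightarrow> bool" where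
  "filtration Ts \<longleftrightarrow> (\<forall>i. cond_expectation (Ts i)) \<and>
     (\<forall>i j. i \<le> j \<longrightarrow> Ts i \<circ> Ts j = Ts i \<and> Ts j \<circ> Ts i = Ts i)"

definition filtration_compatible :: "(nat \<Rightarrow> 'a \<Rightarrow> 'a) \<Rightarrow> ('a \<Rightarrow> 'a) \<Rightarrow> bool" where
  "filtration_compatible Ts T \<longleftrightarrow> (\<forall>i. Ts i \<circ> T = T \<and> T \<circ> Ts i = T)"

definition order_converges :: "(nat \<Rightarrow> 'a::{ordered_real_vector, conditionally_complete_lattice}) \<Rightarrow> 'a \<Rightarrow> bool" where
  "order_converges x l \<longleftrightarrow> (\<exists>p. decseq p \<and> (\<forall>n. 0 \<le> p n) \<and> Inf (range p) = 0 \<and> (\<forall>n. riesz_abs (x n - l) \<le> p n))"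

end

theory Submission
  imports Defs
begin

definition rpos :: "'a::{ordered_real_vector, lattice} \<Rightarrow> 'a" where
  "rpos x = sup x 0"


lemma add_sup_left: "(a::'a::{ordered_real_vector, lattice}) + sup b c = sup (a+b) (a+c)"
proof (rule antisym)
  have "b \<le> sup (a+b) (a+c) - a" "c \<le> sup (a+b) (a+c) - a"
    by (simp_all add: le_diff_eq add.commute)
  then have "sup b c \<le> sup (a+b) (a+c) - a" by simp
  then show "a + sup b c \<le> sup (a+b) (a+c)" by (simp add: le_diff_eq add.commute)
qed (simp add: add_left_mono)

lemma add_inf_left: "(a::'a::{ordered_real_vector, lattice}) + inf b c = inf (a+b) (a+c)"
proof (rule antisym)
  have "inf (a+b) (a+c) - a \<le> b" "inf (a+b) (a+c) - a \<le> c"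
    by (simp_all add: diff_le_eq add.commute)
  then have "inf (a+b) (a+c) - a \<le> inf b c" by simp
  then show "inf (a+b) (a+c) \<le> a + inf b c" by (metis add.commute diff_le_eq)
qed (simp add: add_left_mono)

lemma add_sup_right: "sup b c + (a::'a::{ordered_real_vector, lattice}) = sup (b+a) (c+a)"
  using add_sup_left[of a b c] by (simp add: add.commute)

lemma add_inf_right: "inf b c + (a::'a::{ordered_real_vector, lattice}) = inf (b+a) (c+a)"
  using add_inf_left[of a b c] by (simp add: add.commute)

lemma diff_sup_right: "sup b c - (a::'a::{ordered_real_vector, lattice}) = sup (b-a) (c-a)"
  using add_sup_right[of b c "-a"] by simp

lemma diff_inf_right: "inf b c - (a::'a::{ordered_real_vector, lattice}) = inf (b-a) (c-a)"
  using add_inf_right[of b c "-a"] by simp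

lemma neg_sup: "- sup a b = inf (-a) (-(b::'a::{ordered_real_vector, lattice}))"
proof (rule antisym)
  show "- sup a b \<le> inf (-a) (-b)" by simp
  have "a \<le> - inf (-a) (-b)" "b \<le> - inf (-a) (-b)"
    by (metis inf_le1 le_minus_iff minus_minus, metis inf_le2 le_minus_iff minus_minus)
  then have "sup a b \<le> - inf (-a) (-b)" by simp
  then show "inf (-a) (-b) \<le> - sup a b" by (simp add: le_minus_iff)
qed

lemma neg_inf: "- inf a b = sup (-a) (-(b::'a::{ordered_real_vector, lattice}))"
  using neg_sup[of "-a" "-b"] by (metis minus_minus)

lemma scale_sup: "0 \<le> r \<Longrightarrow> r *\<^sub>R sup a b = sup (r *\<^sub>R a) (r *\<^sub>R (b::'a::{ordered_real_vector, lattice}))"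
proof (cases "r = 0")
  case False
  assume r: "0 \<le> r"
  then have r': "0 < r" using False by simp
  show ?thesis
  proof (rule antisym)
    have "a \<le> (1/r) *\<^sub>R sup (r *\<^sub>R a) (r *\<^sub>R b)"
      using scaleR_left_mono[of "r *\<^sub>R a" "sup (r *\<^sub>R a) (r *\<^sub>R b)" "1/r"] r' by simp
    moreover have "b \<le> (1/r) *\<^sub>R sup (r *\<^sub>R a) (r *\<^sub>R b)"
      using scaleR_left_mono[of "r *\<^sub>R b" "sup (r *\<^sub>R a) (r *\<^sub>R b)" "1/r"] r' by simp
    ultimately have "sup a b \<le> (1/r) *\<^sub>R sup (r *\<^sub>R a) (r *\<^sub>R b)" by simp
    from scaleR_left_mono[OF this r] show "r *\<^sub>R sup a b \<le> sup (r *\<^sub>R a) (r *\<^sub>R b)"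
      using r' by simp
  qed (simp add: scaleR_left_mono r)
qed simp

lemma scale_inf: "0 \<le> r \<Longrightarrow> r *\<^sub>R inf a b = inf (r *\<^sub>R a) (r *\<^sub>R (b::'a::{ordered_real_vector, lattice}))"
proof -
  assume r: "0 \<le> r"
  have "r *\<^sub>R inf a b = - (r *\<^sub>R sup (-a) (-b))" by (simp add: neg_inf[symmetric])
  also have "\<dots> = - sup (- (r *\<^sub>R a)) (- (r *\<^sub>R b))" using scale_sup[OF r, of "-a" "-b"] by simp
  also have "\<dots> = inf (r *\<^sub>R a) (r *\<^sub>R b)" by (simp add: neg_sup)
  finally show ?thesis .
qed

lemma abs_nonneg: "0 \<le> riesz_abs (x::'a::{ordered_real_vector, lattice})"
proof -
  let ?s = "riesz_abs x"
  have "x \<le> ?s" "-x \<le> ?s" by (simp_all add: riesz_abs_def)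
  then have "x + -x \<le> ?s + ?s" by (rule add_mono)
  then have h: "0 \<le> (2::real) *\<^sub>R ?s" by (simp add: scaleR_2)
  show ?thesis using scaleR_nonneg_nonneg[OF _ h, of "1/2"] by simp
qed

lemma abs_ge: "x \<le> riesz_abs x" "-x \<le> riesz_abs (x::'a::{ordered_real_vector, lattice})"
  by (simp_all add: riesz_abs_def)

lemma abs_neg: "riesz_abs (-x) = riesz_abs (x::'a::{ordered_real_vector, lattice})"
  by (simp add: riesz_abs_def sup_commute)

lemma abs_le_iff: "riesz_abs (x::'a::{ordered_real_vector, lattice}) \<le> w \<longleftrightarrow> x \<le> w \<and> -x \<le> w"
  by (simp add: riesz_abs_def)

lemma abs_triangle: "riesz_abs (x + y) \<le> riesz_abs x + riesz_abs (y::'a::{ordered_real_vector, lattice})"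
  unfolding abs_le_iff using add_mono[OF abs_ge(1)[of x] abs_ge(1)[of y]] add_mono[OF abs_ge(2)[of x] abs_ge(2)[of y]]
  by simp

lemma abs_scale: "0 \<le> r \<Longrightarrow> riesz_abs (r *\<^sub>R x) = r *\<^sub>R riesz_abs (x::'a::{ordered_real_vector, lattice})"
  by (simp add: riesz_abs_def scale_sup)

lemma abs_of_nonneg: "0 \<le> x \<Longrightarrow> riesz_abs (x::'a::{ordered_real_vector, lattice}) = x"
  unfolding riesz_abs_def by (rule sup_absorb1) (meson neg_le_0_iff_le order_trans)

lemma rpos_eq: "rpos x = x + rpos (-(x::'a::{ordered_real_vector, lattice}))"
  by (simp add: rpos_def add_sup_left sup_commute)

lemma rpos_nonneg: "0 \<le> rpos (x::'a::{ordered_real_vector, lattice})"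
  by (simp add: rpos_def)

lemma abs_rpos: "riesz_abs x = rpos x + rpos (-(x::'a::{ordered_real_vector, lattice}))"
proof -
  have "rpos x + rpos (-x) = sup (x + rpos (-x)) (rpos (-x))"
    by (simp add: rpos_def add_sup_right)
  also have "x + rpos (-x) = rpos x" by (simp add: rpos_eq[symmetric])
  also have "sup (rpos x) (rpos (-x)) = sup (riesz_abs x) 0"
    by (simp add: rpos_def riesz_abs_def sup_assoc sup_left_commute sup_commute)
  also have "\<dots> = riesz_abs x" using abs_nonneg[of x] by (simp add: sup_absorb1)
  finally show ?thesis by simp
qed

lemma rpos_disj: "inf (rpos (-v)) (rpos (v::'a::{ordered_real_vector, lattice})) = 0"
proof -
  have "inf (rpos (-v)) (rpos v) = inf (rpos (-v)) (v + rpos (-v))" by (simp add: rpos_eq[symmetric])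
  also have "\<dots> = rpos (-v) + inf 0 v"
    by (simp add: add_inf_right add.commute)
  also have "inf 0 v = - rpos (-v)" by (simp add: rpos_def neg_sup inf_commute)
  finally show ?thesis by simp
qed

lemma rpos_mono: "x \<le> y \<Longrightarrow> rpos x \<le> rpos (y::'a::{ordered_real_vector, lattice})"
  by (simp add: rpos_def le_supI1)


lemma add_eq_sup_inf: "a + b = sup a b + inf a (b::'a::{ordered_real_vector, lattice})"
proof -
  have "(a + b) - sup a b = (a+b) + inf (-a) (-b)" by (simp add: neg_sup)
  also have "\<dots> = inf b a" by (simp add: add_inf_left)
  finally show ?thesis by (simp add: inf_commute algebra_simps)
qed

lemma inf_add_le:
  fixes u v w :: "'a::{ordered_real_vector, lattice}"
  assumes "0 \<le> u" "0 \<le> v" "0 \<le> w"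
  shows "inf u (v + w) \<le> inf u v + inf u w"
proof -
  define t where "t = inf u v"
  define p where "p = u - t"
  define q where "q = v - t"
  have t0: "0 \<le> t" using assms by (simp add: t_def)
  have pq: "inf p q = 0" by (simp add: p_def q_def diff_inf_right[symmetric] t_def)
  have e1: "inf u (v + w) - t = inf p (q + w)"
    by (simp add: diff_inf_right p_def q_def algebra_simps)
  have "inf p (q + w) \<le> inf (p + w) (q + w)"
    using assms(3) by (intro inf_mono) (simp_all add: add_increasing2)
  also have "\<dots> = w" by (simp add: add_inf_right[symmetric] pq)
  finally have h1: "inf p (q + w) \<le> w" .
  have h2: "inf p (q + w) \<le> u" using t0 by (simp add: p_def le_infI1)
  have "inf u (v + w) - t \<le> inf u w" using e1 h1 h2 by simp
  then show ?thesis unfolding t_def by (metis add.commute diff_le_eq)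
qed

lemma inf_sup_le:
  fixes x y w :: "'a::{ordered_real_vector, lattice}"
  shows "inf x (sup y w) \<le> sup (inf x y) (inf x w)"
proof -
  define t where "t = inf x (inf y w)"
  define x' where "x' = x - t"
  define y' where "y' = y - t"
  define w' where "w' = w - t"
  have x0: "0 \<le> x'" "0 \<le> y'" "0 \<le> w'"
    by (simp_all add: x'_def y'_def w'_def t_def le_infI2)
  have z: "inf x' (inf y' w') = 0"
    by (simp add: x'_def y'_def w'_def diff_inf_right[symmetric] t_def)
  have "inf x (sup y w) - t = inf x' (sup y' w')"
    by (simp add: x'_def y'_def w'_def diff_inf_right diff_sup_right)
  also have "\<dots> \<le> inf x' (y' + w')"
    using x0 by (intro inf_mono) (simp_all add: add_increasing add_increasing2)
  also have "\<dots> \<le> inf x' y' + inf x' w'" using x0 by (rule inf_add_le)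
  also have "\<dots> = sup (inf x' y') (inf x' w') + inf (inf x' y') (inf x' w')" by (rule add_eq_sup_inf)
  also have "inf (inf x' y') (inf x' w') = 0" using z x0 by (simp add: inf_aci inf_absorb1)
  also have "sup (inf x' y') (inf x' w') = sup (inf x y) (inf x w) - t"
    by (simp add: x'_def y'_def w'_def diff_inf_right diff_sup_right)
  finally show ?thesis by simp
qed

lemma inf_sup4:
  fixes a b c d :: "'a::{ordered_real_vector, lattice}"
  shows "inf (sup a b) (sup c d) \<le> sup (sup (inf a c) (inf a d)) (sup (inf b c) (inf b d))"
proof -
  have 1: "inf (sup a b) (sup c d) \<le> sup (inf (sup a b) c) (inf (sup a b) d)" by (rule inf_sup_le)
  have 2: "inf (sup a b) c \<le> sup (inf a c) (inf b c)"
    using inf_sup_le[of c a b] by (simp add: inf_commute)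
  have 3: "inf (sup a b) d \<le> sup (inf a d) (inf b d)"
    using inf_sup_le[of d a b] by (simp add: inf_commute)
  have "inf (sup a b) (sup c d) \<le> sup (sup (inf a c) (inf b c)) (sup (inf a d) (inf b d))"
    using 1 sup_mono[OF 2 3] by (rule order_trans)
  also have "\<dots> = sup (sup (inf a c) (inf a d)) (sup (inf b c) (inf b d))" by (simp add: sup_aci)
  finally show ?thesis .
qed

lemma inf_sum_le:
  fixes u :: "'a::{ordered_real_vector, lattice}"
  assumes "finite J" "0 \<le> u" "\<forall>j\<in>J. 0 \<le> b j"
  shows "inf u (sum b J) \<le> (\<Sum>j\<in>J. inf u (b j))"
  using assms(1,3)
proof (induction J rule: finite_induct)
  case empty
  then show ?case by simp
next
  case (insert i F)
  have "inf u (sum b (insert i F)) = inf u (b i + sum b F)" using insert by simp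
  also have "\<dots> \<le> inf u (b i) + inf u (sum b F)"
    using insert assms(2) by (intro inf_add_le) (simp_all add: sum_nonneg)
  also have "\<dots> \<le> inf u (b i) + (\<Sum>j\<in>F. inf u (b j))" using insert by (simp add: add_left_mono)
  finally show ?case using insert by simp
qed

lemma disjoint_sum_le:
  fixes K :: "'a::{ordered_real_vector, lattice}"
  assumes "finite J" "0 \<le> K" "\<forall>j\<in>J. 0 \<le> b j \<and> b j \<le> K"
    "\<forall>i\<in>J. \<forall>j\<in>J. i \<noteq> j \<longrightarrow> inf (b i) (b j) = 0"
  shows "sum b J \<le> K"
  using assms(1,3,4)
proof (induction J rule: finite_induct)
  case empty
  then show ?case using assms(2) by simp
next
  case (insert i F)
  have "inf (b i) (sum b F) \<le> (\<Sum>j\<in>F. inf (b i) (b j))"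
    using insert by (intro inf_sum_le) auto
  also have "\<dots> = 0" using insert by (intro sum.neutral) auto
  finally have d: "inf (b i) (sum b F) = 0"
    using insert by (intro antisym) (auto intro: sum_nonneg)
  have "sum b (insert i F) = b i + sum b F" using insert by simp
  also have "\<dots> = sup (b i) (sum b F)" by (subst add_eq_sup_inf) (simp add: d)
  also have "\<dots> \<le> K" using insert by auto
  finally show ?case .
qed


lemma shift_rpos: "x + 2 *\<^sub>R rpos (w - x) = sup (2 *\<^sub>R w - x) (x::'a::{ordered_real_vector, lattice})"
proof -
  have "x + 2 *\<^sub>R rpos (w - x) = x + sup (2 *\<^sub>R (w - x)) 0"
    by (simp add: rpos_def scale_sup)
  also have "\<dots> = sup (x + 2 *\<^sub>R (w - x)) x" by (simp add: add_sup_left)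
  also have "x + 2 *\<^sub>R (w - x) = 2 *\<^sub>R w - x" by (simp add: algebra_simps scaleR_2)
  finally show ?thesis .
qed

lemma bump_le:
  fixes z w :: "'a::{ordered_real_vector, lattice}"
  shows "inf (z + 2 *\<^sub>R rpos (w - z)) (-z + 2 *\<^sub>R rpos (w + z))
           \<le> riesz_abs z + 2 *\<^sub>R rpos (w - riesz_abs z)"
proof -
  have e1: "z + 2 *\<^sub>R rpos (w - z) = sup (2 *\<^sub>R w - z) z" by (rule shift_rpos)
  have e2: "-z + 2 *\<^sub>R rpos (w + z) = sup (2 *\<^sub>R w + z) (-z)"
    using shift_rpos[of "-z" w] by simp
  have e3: "riesz_abs z + 2 *\<^sub>R rpos (w - riesz_abs z) = sup (2 *\<^sub>R w - riesz_abs z) (riesz_abs z)"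
    by (rule shift_rpos)
  have ac: "inf (2 *\<^sub>R w - z) (2 *\<^sub>R w + z) = 2 *\<^sub>R w - riesz_abs z"
  proof -
    have "inf (2 *\<^sub>R w - z) (2 *\<^sub>R w + z) = 2 *\<^sub>R w + inf (-z) z"
      by (simp add: add_inf_left)
    also have "inf (-z) z = - riesz_abs z" by (simp add: riesz_abs_def neg_sup inf_commute)
    finally show ?thesis by simp
  qed
  have "inf (sup (2 *\<^sub>R w - z) z) (sup (2 *\<^sub>R w + z) (-z)) \<le>
     sup (sup (inf (2 *\<^sub>R w - z) (2 *\<^sub>R w + z)) (inf (2 *\<^sub>R w - z) (-z)))
         (sup (inf z (2 *\<^sub>R w + z)) (inf z (-z)))" by (rule inf_sup4)
  also have "\<dots> \<le> sup (2 *\<^sub>R w - riesz_abs z) (riesz_abs z)"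
    unfolding ac using abs_ge[of z]
    by (intro sup_least; meson le_infI1 le_infI2 sup_ge1 sup_ge2 order_trans)
  finally show ?thesis using e1 e2 e3 by simp
qed

lemma bump_disj:
  fixes x e :: "'a::{ordered_real_vector, lattice}"
  assumes e: "0 \<le> e" and ab: "2 * c \<le> \<bar>a - b\<bar>"
  shows "inf (rpos (c *\<^sub>R e - riesz_abs (x - a *\<^sub>R e))) (rpos (c *\<^sub>R e - riesz_abs (x - b *\<^sub>R e))) = 0"
proof -
  define u where "u = c *\<^sub>R e - riesz_abs (x - a *\<^sub>R e)"
  define v where "v = c *\<^sub>R e - riesz_abs (x - b *\<^sub>R e)"
  have "riesz_abs ((b - a) *\<^sub>R e) = \<bar>a - b\<bar> *\<^sub>R e"
  proof (cases "0 \<le> b - a")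
    case True
    then show ?thesis using abs_scale[OF True, of e] abs_of_nonneg[OF e] by simp
  next
    case False
    then have "0 \<le> a - b" by simp
    then show ?thesis using abs_scale[of "a - b" e] abs_of_nonneg[OF e] abs_neg[of "(a - b) *\<^sub>R e"]
      by (simp add: algebra_simps)
  qed
  moreover have "riesz_abs ((b - a) *\<^sub>R e) \<le> riesz_abs (x - a *\<^sub>R e) + riesz_abs (x - b *\<^sub>R e)"
  proof -
    have "(b - a) *\<^sub>R e = (x - a *\<^sub>R e) + - (x - b *\<^sub>R e)" by (simp add: algebra_simps)
    then show ?thesis using abs_triangle[of "x - a *\<^sub>R e" "- (x - b *\<^sub>R e)"] abs_neg by metis
  qed
  moreover have "(2 * c) *\<^sub>R e \<le> \<bar>a - b\<bar> *\<^sub>R e" using ab e by (rule scaleR_right_mono)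
  ultimately have "(2 * c) *\<^sub>R e \<le> riesz_abs (x - a *\<^sub>R e) + riesz_abs (x - b *\<^sub>R e)" by simp
  then have "u + v \<le> 0" by (simp add: u_def v_def algebra_simps scaleR_2 flip: scaleR_scaleR)
  then have "u \<le> -v" using add_right_mono[of "u+v" 0 "-v"] by simp
  then have "inf (rpos u) (rpos v) \<le> inf (rpos (-v)) (rpos v)" by (intro inf_mono rpos_mono) simp_all
  also have "\<dots> = 0" by (rule rpos_disj)
  finally show ?thesis unfolding u_def[symmetric] v_def[symmetric]
    by (intro antisym) (simp_all add: rpos_nonneg)
qed


lemma op_mono:
  assumes "linear Q" "positive_op Q" "x \<le> (y::'a::{ordered_real_vector, lattice})"
  shows "Q x \<le> Q y"
proof -
  have "0 \<le> Q (y - x)" using assms by (simp add: positive_op_def)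
  then show ?thesis using assms(1) by (simp add: linear_diff)
qed

lemma op_abs:
  assumes "linear Q" "positive_op Q"
  shows "riesz_abs (Q x) \<le> Q (riesz_abs (x::'a::{ordered_real_vector, lattice}))"
proof -
  have "Q x \<le> Q (riesz_abs x)" using assms abs_ge(1) by (rule op_mono)
  moreover have "Q (-x) \<le> Q (riesz_abs x)" using assms abs_ge(2) by (rule op_mono)
  ultimately show ?thesis using assms(1) by (simp add: abs_le_iff linear_neg)
qed

lemma step_bound:
  fixes Q :: "'a::{ordered_real_vector, lattice} \<Rightarrow> 'a"
  assumes lin: "linear Q" and pos: "positive_op Q" and Qz: "Q z = z" and Qy: "Q y = 0"
    and yb: "riesz_abs y \<le> c *\<^sub>R e"
    and A: "Q (rpos (z + c *\<^sub>R e)) = rpos (z + c *\<^sub>R e)"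
    and B: "Q (rpos (c *\<^sub>R e - z)) = rpos (c *\<^sub>R e - z)"
  shows "Q (riesz_abs (z + y)) \<le> riesz_abs z + 2 *\<^sub>R rpos (c *\<^sub>R e - riesz_abs z)"
proof -
  define u where "u = z + y"
  have Qu: "Q u = z" using lin Qz Qy by (simp add: u_def linear_add)
  have y1: "y \<le> c *\<^sub>R e" "-y \<le> c *\<^sub>R e" using yb by (simp_all add: abs_le_iff)
  have h1: "rpos u \<le> rpos (z + c *\<^sub>R e)" using y1 by (intro rpos_mono) (simp add: u_def)
  have h2: "rpos (-u) \<le> rpos (c *\<^sub>R e - z)" using y1
    by (intro rpos_mono) (simp add: u_def algebra_simps)
  have q1: "Q (rpos u) \<le> rpos (z + c *\<^sub>R e)" using op_mono[OF lin pos h1] A by simp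
  have q2: "Q (rpos (-u)) \<le> rpos (c *\<^sub>R e - z)" using op_mono[OF lin pos h2] B by simp
  have q3: "Q (rpos u) = z + Q (rpos (-u))"
  proof -
    have "rpos u = u + rpos (-u)" by (rule rpos_eq)
    then have "Q (rpos u) = Q u + Q (rpos (-u))" using lin by (simp add: linear_add)
    then show ?thesis using Qu by simp
  qed
  have q4: "Q (rpos (-u)) = -z + Q (rpos u)"
  proof -
    have "rpos (-u) = -u + rpos u" using rpos_eq[of "-u"] by simp
    then have "Q (rpos (-u)) = Q (-u) + Q (rpos u)" using lin by (metis linear_add)
    then show ?thesis using Qu lin by (simp add: linear_neg)
  qed
  have Qa: "Q (riesz_abs u) = Q (rpos u) + Q (rpos (-u))"
    using lin by (simp add: abs_rpos linear_add)
  have b1: "Q (riesz_abs u) \<le> z + 2 *\<^sub>R rpos (c *\<^sub>R e - z)"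
  proof -
    have "Q (riesz_abs u) = z + Q (rpos (-u)) + Q (rpos (-u))" using Qa q3 by simp
    also have "\<dots> \<le> z + rpos (c *\<^sub>R e - z) + rpos (c *\<^sub>R e - z)"
      using q2 by (intro add_mono) simp_all
    finally show ?thesis by (simp add: scaleR_2 add.assoc)
  qed
  have b2: "Q (riesz_abs u) \<le> -z + 2 *\<^sub>R rpos (c *\<^sub>R e + z)"
  proof -
    have "Q (riesz_abs u) = Q (rpos u) + (-z + Q (rpos u))" using Qa q4 by simp
    also have "\<dots> \<le> rpos (z + c *\<^sub>R e) + (-z + rpos (z + c *\<^sub>R e))"
      using q1 by (intro add_mono) simp_all
    finally show ?thesis by (simp add: scaleR_2 algebra_simps)
  qed
  have "Q (riesz_abs u) \<le> inf (z + 2 *\<^sub>R rpos (c *\<^sub>R e - z)) (-z + 2 *\<^sub>R rpos (c *\<^sub>R e + z))"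
    using b1 b2 by simp
  also have "\<dots> \<le> riesz_abs z + 2 *\<^sub>R rpos (c *\<^sub>R e - riesz_abs z)" by (rule bump_le)
  finally show ?thesis by (simp add: u_def)
qed


lemma rs_closed:
  assumes "riesz_subspace (R::'a::{ordered_real_vector, lattice} set)" "x \<in> R" "y \<in> R"
  shows "x + y \<in> R" "r *\<^sub>R x \<in> R" "- x \<in> R" "x - y \<in> R" "sup x y \<in> R" "inf x y \<in> R"
    "rpos x \<in> R" "riesz_abs x \<in> R" "0 \<in> R"
proof -
  show 1: "x + y \<in> R" "r *\<^sub>R x \<in> R" "sup x y \<in> R" "inf x y \<in> R" "0 \<in> R"
    using assms by (auto simp: riesz_subspace_def)
  have n: "\<And>w. w \<in> R \<Longrightarrow> - w \<in> R"
    using assms(1) unfolding riesz_subspace_def by (metis scaleR_minus1_left)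
  show "- x \<in> R" using n assms by simp
  show "x - y \<in> R" using n assms unfolding riesz_subspace_def by (metis diff_conv_add_uminus)
  show "rpos x \<in> R" using assms unfolding riesz_subspace_def rpos_def by auto
  show "riesz_abs x \<in> R" using assms n unfolding riesz_subspace_def riesz_abs_def by auto
qed

lemma bumps_sum:
  fixes x e :: "'a::{ordered_real_vector, lattice}"
  assumes e: "0 \<le> e" and c: "0 \<le> c"
  shows "(\<Sum>j<m. 2 *\<^sub>R rpos (c *\<^sub>R e - riesz_abs (x - (2 * c * real j) *\<^sub>R e))) \<le> (2 * c) *\<^sub>R e"
proof (rule disjoint_sum_le)
  show "0 \<le> (2 * c) *\<^sub>R e" using e c by (simp add: scaleR_nonneg_nonneg)
  have ce: "0 \<le> c *\<^sub>R e" using e c by (simp add: scaleR_nonneg_nonneg)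
  show "\<forall>j\<in>{..<m}. 0 \<le> 2 *\<^sub>R rpos (c *\<^sub>R e - riesz_abs (x - (2 * c * real j) *\<^sub>R e)) \<and>
      2 *\<^sub>R rpos (c *\<^sub>R e - riesz_abs (x - (2 * c * real j) *\<^sub>R e)) \<le> (2 * c) *\<^sub>R e"
  proof
    fix j
    have "rpos (c *\<^sub>R e - riesz_abs (x - (2 * c * real j) *\<^sub>R e)) \<le> rpos (c *\<^sub>R e)"
      using abs_nonneg by (intro rpos_mono) simp
    also have "\<dots> = c *\<^sub>R e" using ce by (simp add: rpos_def sup_absorb1)
    finally have "2 *\<^sub>R rpos (c *\<^sub>R e - riesz_abs (x - (2 * c * real j) *\<^sub>R e)) \<le> 2 *\<^sub>R (c *\<^sub>R e)"
      by (rule scaleR_left_mono) simp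
    then show "0 \<le> 2 *\<^sub>R rpos (c *\<^sub>R e - riesz_abs (x - (2 * c * real j) *\<^sub>R e)) \<and>
      2 *\<^sub>R rpos (c *\<^sub>R e - riesz_abs (x - (2 * c * real j) *\<^sub>R e)) \<le> (2 * c) *\<^sub>R e"
      using scaleR_nonneg_nonneg[OF _ rpos_nonneg, of 2] by simp
  qed
  show "\<forall>i\<in>{..<m}. \<forall>j\<in>{..<m}. i \<noteq> j \<longrightarrow>
     inf (2 *\<^sub>R rpos (c *\<^sub>R e - riesz_abs (x - (2 * c * real i) *\<^sub>R e)))
         (2 *\<^sub>R rpos (c *\<^sub>R e - riesz_abs (x - (2 * c * real j) *\<^sub>R e))) = 0"
  proof (intro ballI impI)
    fix i j :: nat
    assume "i \<noteq> j"
    then have "1 \<le> \<bar>real i - real j\<bar>" by linarith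
    then have "2 * c * 1 \<le> 2 * c * \<bar>real i - real j\<bar>" using c by (intro mult_left_mono) simp_all
    also have "\<dots> = \<bar>2 * c * real i - 2 * c * real j\<bar>" using c by (simp add: abs_mult right_diff_distrib[symmetric])
    finally have ab: "2 * c \<le> \<bar>2 * c * real i - 2 * c * real j\<bar>" by simp
    show "inf (2 *\<^sub>R rpos (c *\<^sub>R e - riesz_abs (x - (2 * c * real i) *\<^sub>R e)))
         (2 *\<^sub>R rpos (c *\<^sub>R e - riesz_abs (x - (2 * c * real j) *\<^sub>R e))) = 0"
      using bump_disj[OF e ab, of x] by (simp add: scale_inf[symmetric])
  qed
qed simp

lemma pot_step:
  fixes Q :: "'a::{ordered_real_vector, lattice} \<Rightarrow> 'a"
  assumes lin: "linear Q" and pos: "positive_op Q" and R: "riesz_subspace R"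
    and QR: "\<forall>w\<in>R. Q w = w" and xR: "x \<in> R" and eR: "e \<in> R" and e: "0 \<le> e" and c: "0 \<le> c"
    and Qy: "Q y = 0" and yb: "riesz_abs y \<le> c *\<^sub>R e"
  shows "Q (\<Sum>j<m. riesz_abs (x + y - (2 * c * real j) *\<^sub>R e))
     \<le> (\<Sum>j<m. riesz_abs (x - (2 * c * real j) *\<^sub>R e)) + (2 * c) *\<^sub>R e"
proof -
  have "Q (\<Sum>j<m. riesz_abs (x + y - (2 * c * real j) *\<^sub>R e))
      = (\<Sum>j<m. Q (riesz_abs ((x - (2 * c * real j) *\<^sub>R e) + y)))"
    using lin by (simp add: linear_sum algebra_simps)
  also have "\<dots> \<le> (\<Sum>j<m. riesz_abs (x - (2 * c * real j) *\<^sub>R e)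
       + 2 *\<^sub>R rpos (c *\<^sub>R e - riesz_abs (x - (2 * c * real j) *\<^sub>R e)))"
  proof (rule sum_mono)
    fix j
    define z where "z = x - (2 * c * real j) *\<^sub>R e"
    have zR: "z \<in> R" using rs_closed[OF R] xR eR by (simp add: z_def)
    have ceR: "c *\<^sub>R e \<in> R" using rs_closed[OF R] eR by simp
    show "Q (riesz_abs (z + y)) \<le> riesz_abs z + 2 *\<^sub>R rpos (c *\<^sub>R e - riesz_abs z)"
    proof (rule step_bound[OF lin pos _ Qy yb])
      show "Q z = z" using QR zR by simp
      show "Q (rpos (z + c *\<^sub>R e)) = rpos (z + c *\<^sub>R e)"
        using QR rs_closed[OF R] zR ceR by simp
      show "Q (rpos (c *\<^sub>R e - z)) = rpos (c *\<^sub>R e - z)"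
        using QR rs_closed[OF R] zR ceR by simp
    qed
  qed
  also have "\<dots> = (\<Sum>j<m. riesz_abs (x - (2 * c * real j) *\<^sub>R e))
       + (\<Sum>j<m. 2 *\<^sub>R rpos (c *\<^sub>R e - riesz_abs (x - (2 * c * real j) *\<^sub>R e)))"
    by (simp add: sum.distrib)
  also have "\<dots> \<le> (\<Sum>j<m. riesz_abs (x - (2 * c * real j) *\<^sub>R e)) + (2 * c) *\<^sub>R e"
    using bumps_sum[OF e c, where m=m and x=x] by (rule add_left_mono)
  finally show ?thesis .
qed


lemma archimedean_zero:
  fixes d e :: "'a::{ordered_real_vector, conditionally_complete_lattice}"
  assumes d: "0 \<le> d" and K: "0 \<le> K" and e: "0 \<le> e"
    and b: "\<And>m::nat. m \<ge> 1 \<Longrightarrow> d \<le> (K / real m) *\<^sub>R e"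
  shows "d = 0"
proof -
  have bm: "real m *\<^sub>R d \<le> K *\<^sub>R e" for m :: nat
  proof (cases "m = 0")
    case True
    then show ?thesis using K e by (simp add: scaleR_nonneg_nonneg)
  next
    case False
    then have "real m *\<^sub>R d \<le> real m *\<^sub>R ((K / real m) *\<^sub>R e)"
      using b[of m] by (intro scaleR_left_mono) simp_all
    then show ?thesis using False by simp
  qed
  define A where "A = range (\<lambda>m::nat. real m *\<^sub>R d)"
  have bdd: "bdd_above A" unfolding A_def using bm by (intro bdd_aboveI) auto
  have "real m *\<^sub>R d \<le> Sup A - d" for m :: nat
  proof -
    have mem: "real (Suc m) *\<^sub>R d \<in> A" unfolding A_def by (rule rangeI)
    have "real (Suc m) *\<^sub>R d \<le> Sup A" using bdd mem by (intro cSup_upper)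
    then show ?thesis by (simp add: algebra_simps le_diff_eq)
  qed
  then have "Sup A \<le> Sup A - d" unfolding A_def by (intro cSup_least) auto
  then have "d \<le> 0" by (simp add: le_diff_eq)
  then show ?thesis using d by simp
qed


theorem lemma4p1:
  fixes T :: "'a::{ordered_real_vector, conditionally_complete_lattice} \<Rightarrow> 'a"
    and Ts :: "nat \<Rightarrow> 'a \<Rightarrow> 'a"
    and e :: 'a
    and f :: "nat \<Rightarrow> 'a"
    and g :: "nat \<Rightarrow> 'a"
  assumes "cond_expectation T"
    and "weak_order_unit e"
    and "T e = e"
    and "filtration Ts"
    and "filtration_compatible Ts T"
    and "\<forall>i. f i \<in> range (Ts i)"
    and "\<exists>B>0. \<forall>i. riesz_abs (f i) \<le> B *\<^sub>R e"
    and "\<forall>i\<ge>1. g i = f i - Ts (i - 1) (f i)"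
  shows "(\<forall>i\<ge>1. g i \<in> range (Ts i)) \<and> (\<forall>i. Ts i (g (i + 1)) = 0)
     \<and> order_converges (\<lambda>n. T (riesz_abs ((1 / real n) *\<^sub>R (\<Sum>i=1..n. g i)))) 0"
proof -
  note CE = assms(1)[unfolded cond_expectation_def]
  have linT: "linear T" and posT: "positive_op T" using CE by auto
  have e0: "0 \<le> e" using assms(2) by (simp add: weak_order_unit_def)
  have TsCE: "cond_expectation (Ts i)" for i using assms(4) by (simp add: filtration_def)
  have linTs: "linear (Ts i)" and posTs: "positive_op (Ts i)"
    and idTs: "Ts i (Ts i x) = Ts i x" and rsTs: "riesz_subspace (range (Ts i))" for i x
    using TsCE[of i] unfolding cond_expectation_def dedekind_complete_riesz_subspace_def
    by (auto simp: fun_eq_iff)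
  have filt: "i \<le> j \<Longrightarrow> Ts j (Ts i x) = Ts i x" for i j x
    using assms(4) unfolding filtration_def by (metis comp_apply)
  have TTs: "T (Ts i x) = T x" for i x
    using assms(5) unfolding filtration_compatible_def by (metis comp_apply)
  have TsT: "Ts i (T x) = T x" for i x
    using assms(5) unfolding filtration_compatible_def by (metis comp_apply)
  have Tse: "Ts i e = e" for i using TsT[of i e] assms(3) by simp
  have QR: "\<forall>w\<in>range (Ts i). Ts i w = w" for i using idTs by auto
  have mono_range: "i \<le> j \<Longrightarrow> w \<in> range (Ts i) \<Longrightarrow> w \<in> range (Ts j)" for i j w
    using filt by (metis rangeE rangeI)
  have eR: "e \<in> range (Ts i)" for i using Tse[of i] by (metis rangeI)
  have gR: "g i \<in> range (Ts i)" if "i \<ge> 1" for i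
  proof -
    have "f i \<in> range (Ts i)" using assms(6) by simp
    moreover have "Ts (i - 1) (f i) \<in> range (Ts i)" using mono_range[of "i - 1" i] by simp
    ultimately show ?thesis using assms(8) that rs_closed(4)[OF rsTs] by simp
  qed
  have gm: "Ts i (g (i + 1)) = 0" for i
  proof -
    have "g (i + 1) = f (i + 1) - Ts i (f (i + 1))" using assms(8) by simp
    then show ?thesis using linTs[of i] idTs[of i] by (simp add: linear_diff)
  qed
  obtain B where B: "B > 0" "\<forall>i. riesz_abs (f i) \<le> B *\<^sub>R e" using assms(7) by blast
  define c where "c = 2 * B"
  have c0: "0 \<le> c" using B by (simp add: c_def)
  have gb: "riesz_abs (g i) \<le> c *\<^sub>R e" if "i \<ge> 1" for i
  proof -
    have "riesz_abs (g i) = riesz_abs (f i + - Ts (i - 1) (f i))" using assms(8) that by simp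
    also have "\<dots> \<le> riesz_abs (f i) + riesz_abs (Ts (i - 1) (f i))"
      using abs_triangle abs_neg by metis
    also have "riesz_abs (Ts (i - 1) (f i)) \<le> Ts (i - 1) (riesz_abs (f i))"
      using op_abs[OF linTs posTs] .
    also have "Ts (i - 1) (riesz_abs (f i)) \<le> Ts (i - 1) (B *\<^sub>R e)"
      using B op_mono[OF linTs posTs] by simp
    also have "Ts (i - 1) (B *\<^sub>R e) = B *\<^sub>R e" using linTs Tse by (simp add: linear_scale)
    finally have "riesz_abs (g i) \<le> riesz_abs (f i) + B *\<^sub>R e" by simp
    also have "\<dots> \<le> B *\<^sub>R e + B *\<^sub>R e" using B by (intro add_right_mono) simp
    finally show ?thesis by (simp add: c_def scaleR_2[symmetric] scaleR_scaleR)
  qed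
  define S where "S n = (\<Sum>i=1..n. g i)" for n
  have S0: "S 0 = 0" by (simp add: S_def)
  have SSuc: "S (Suc n) = S n + g (Suc n)" for n by (simp add: S_def)
  have SR: "S n \<in> range (Ts n)" for n
  proof (induction n)
    case 0
    then show ?case using rsTs[of 0] S0 by (simp add: riesz_subspace_def)
  next
    case (Suc n)
    have "S n \<in> range (Ts (Suc n))" using mono_range[OF _ Suc] by simp
    moreover have "g (Suc n) \<in> range (Ts (Suc n))" using gR by simp
    ultimately show ?case using SSuc rs_closed(1)[OF rsTs] by simp
  qed
  define Phi where "Phi m x = (\<Sum>j<m. riesz_abs (x - (2 * c * real j) *\<^sub>R e))" for m x
  have Phi_it: "T (Phi m (S n)) \<le> T (Phi m 0) + (real n * (2 * c)) *\<^sub>R e" for m n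
  proof (induction n)
    case 0
    then show ?case using S0 by simp
  next
    case (Suc n)
    have st: "Ts n (Phi m (S n + g (Suc n))) \<le> Phi m (S n) + (2 * c) *\<^sub>R e"
      unfolding Phi_def
      by (rule pot_step[OF linTs posTs rsTs QR SR eR e0 c0]) (use gm[of n] gb[of "Suc n"] in simp_all)
    have "T (Phi m (S (Suc n))) = T (Ts n (Phi m (S n + g (Suc n))))" using SSuc TTs by simp
    also have "\<dots> \<le> T (Phi m (S n) + (2 * c) *\<^sub>R e)" using op_mono[OF linT posT st] .
    also have "\<dots> = T (Phi m (S n)) + (2 * c) *\<^sub>R e" using linT assms(3) by (simp add: linear_add linear_scale)
    also have "\<dots> \<le> T (Phi m 0) + (real n * (2 * c)) *\<^sub>R e + (2 * c) *\<^sub>R e"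
      using Suc by (rule add_right_mono)
    also have "\<dots> = T (Phi m 0) + (real (Suc n) * (2 * c)) *\<^sub>R e"
      by (simp add: ring_distribs scaleR_add_left add.assoc)
    finally show ?case .
  qed
  have Phi0: "Phi m 0 \<le> (real m * (2 * c * real m)) *\<^sub>R e" for m
  proof -
    have "Phi m 0 \<le> (\<Sum>j<m. (2 * c * real m) *\<^sub>R e)" unfolding Phi_def
    proof (rule sum_mono)
      fix j assume "j \<in> {..<m}"
      then have j: "2 * c * real j \<le> 2 * c * real m" using c0 by (intro mult_left_mono) simp_all
      have "riesz_abs (0 - (2 * c * real j) *\<^sub>R e) = (2 * c * real j) *\<^sub>R e"
        using abs_scale[of "2 * c * real j" e] abs_of_nonneg[OF e0] c0 by (simp add: abs_neg)
      also have "\<dots> \<le> (2 * c * real m) *\<^sub>R e" using j e0 by (rule scaleR_right_mono)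
      finally show "riesz_abs (0 - (2 * c * real j) *\<^sub>R e) \<le> (2 * c * real m) *\<^sub>R e" .
    qed
    also have "\<dots> = (real m * (2 * c * real m)) *\<^sub>R e" by (simp add: sum_constant_scaleR)
    finally show ?thesis .
  qed
  have Phi_low: "real m *\<^sub>R riesz_abs x \<le> Phi m x + (real m * (2 * c * real m)) *\<^sub>R e" for m x
  proof -
    have "real m *\<^sub>R riesz_abs x = (\<Sum>j<m. riesz_abs x)" by (simp add: sum_constant_scaleR)
    also have "\<dots> \<le> (\<Sum>j<m. riesz_abs (x - (2 * c * real j) *\<^sub>R e) + (2 * c * real m) *\<^sub>R e)"
    proof (rule sum_mono)
      fix j assume "j \<in> {..<m}"
      then have j: "2 * c * real j \<le> 2 * c * real m" using c0 by (intro mult_left_mono) simp_all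
      have t1: "riesz_abs x \<le> riesz_abs (x - (2 * c * real j) *\<^sub>R e) + riesz_abs ((2 * c * real j) *\<^sub>R e)"
        using abs_triangle[of "x - (2 * c * real j) *\<^sub>R e" "(2 * c * real j) *\<^sub>R e"] by simp
      have t2: "riesz_abs ((2 * c * real j) *\<^sub>R e) = (2 * c * real j) *\<^sub>R e"
        using abs_scale[of "2 * c * real j" e] abs_of_nonneg[OF e0] c0 by simp
      have t3: "(2 * c * real j) *\<^sub>R e \<le> (2 * c * real m) *\<^sub>R e" using j e0 by (rule scaleR_right_mono)
      show "riesz_abs x \<le> riesz_abs (x - (2 * c * real j) *\<^sub>R e) + (2 * c * real m) *\<^sub>R e"
        using order_trans[OF t1[unfolded t2] add_left_mono[OF t3]] .
    qed
    also have "\<dots> = Phi m x + (real m * (2 * c * real m)) *\<^sub>R e"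
      by (simp add: Phi_def sum.distrib sum_constant_scaleR)
    finally show ?thesis .
  qed
  have main: "real m *\<^sub>R T (riesz_abs (S n)) \<le> (4 * c * real m * real m + 2 * c * real n) *\<^sub>R e" for m n
  proof -
    have "real m *\<^sub>R T (riesz_abs (S n)) = T (real m *\<^sub>R riesz_abs (S n))" using linT by (simp add: linear_scale)
    also have "\<dots> \<le> T (Phi m (S n) + (real m * (2 * c * real m)) *\<^sub>R e)"
      using op_mono[OF linT posT Phi_low] .
    also have "\<dots> = T (Phi m (S n)) + (real m * (2 * c * real m)) *\<^sub>R e"
      using linT assms(3) by (simp add: linear_add linear_scale)
    also have "\<dots> \<le> T (Phi m 0) + (real n * (2 * c)) *\<^sub>R e + (real m * (2 * c * real m)) *\<^sub>R e"
      using Phi_it by (rule add_right_mono)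
    also have "T (Phi m 0) \<le> T ((real m * (2 * c * real m)) *\<^sub>R e)"
      using op_mono[OF linT posT Phi0] .
    also have "T ((real m * (2 * c * real m)) *\<^sub>R e) = (real m * (2 * c * real m)) *\<^sub>R e"
      using linT assms(3) by (simp add: linear_scale)
    finally have "real m *\<^sub>R T (riesz_abs (S n)) \<le> (real m * (2 * c * real m)) *\<^sub>R e
       + (real n * (2 * c)) *\<^sub>R e + (real m * (2 * c * real m)) *\<^sub>R e" by simp
    also have "\<dots> = (4 * c * real m * real m + 2 * c * real n) *\<^sub>R e"
      by (simp add: scaleR_add_left[symmetric] algebra_simps del: scaleR_add_left)
    finally show ?thesis .
  qed
  define a where "a n = T (riesz_abs ((1 / real n) *\<^sub>R S n))" for n
  have a_nonneg: "0 \<le> a n" for n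
    using posT abs_nonneg unfolding a_def positive_op_def by blast
  have ab: "a n \<le> (6 * c / real m) *\<^sub>R e" if m1: "1 \<le> m" and mn: "m * m \<le> n" for m n
  proof -
    have "1 * 1 \<le> m * m" using mult_le_mono[OF m1 m1] .
    then have n1: "1 \<le> n" using mn by linarith
    have rm: "0 < real m" and rn: "0 < real n" using m1 n1 by simp_all
    define K where "K = 4 * c * real m * real m + 2 * c * real n"
    have "(1 / real m) *\<^sub>R (real m *\<^sub>R T (riesz_abs (S n))) \<le> (1 / real m) *\<^sub>R (K *\<^sub>R e)"
      using main[of m n] rm unfolding K_def by (intro scaleR_left_mono) simp_all
    then have h1: "T (riesz_abs (S n)) \<le> (K / real m) *\<^sub>R e" using rm by simp
    have "a n = (1 / real n) *\<^sub>R T (riesz_abs (S n))"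
      unfolding a_def using rn linT by (simp add: abs_scale linear_scale)
    also have "\<dots> \<le> (1 / real n) *\<^sub>R ((K / real m) *\<^sub>R e)"
      using h1 rn by (intro scaleR_left_mono) simp_all
    also have "\<dots> = (K / (real m * real n)) *\<^sub>R e" by (simp add: mult.commute)
    also have "\<dots> \<le> (6 * c / real m) *\<^sub>R e"
    proof (rule scaleR_right_mono[OF _ e0])
      have mm: "real m * real m \<le> real n" using mn by (metis of_nat_le_iff of_nat_mult)
      have "c * (real m * real m) \<le> c * real n" using mult_left_mono[OF mm c0] .
      have e6: "6 * c / real m * (real m * real n) = 6 * c * real n" using rm by (simp add: field_simps)
      have "K \<le> 6 * c / real m * (real m * real n)" unfolding e6 K_def
        using \<open>c * (real m * real m) \<le> c * real n\<close> by (simp add: mult.assoc)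
      then show "K / (real m * real n) \<le> 6 * c / real m" using rm rn
        by (simp add: divide_le_eq)
    qed
    finally show ?thesis .
  qed
  have a0: "a 0 = 0" unfolding a_def using linT by (simp add: riesz_abs_def linear_0)
  have aB: "a n \<le> (6 * c) *\<^sub>R e" for n
  proof (cases "n = 0")
    case True
    then show ?thesis using a0 c0 e0 by (simp add: scaleR_nonneg_nonneg)
  next
    case False
    then show ?thesis using ab[of 1 n] by simp
  qed
  have bdd: "bdd_above (a ` X)" for X using aB by (intro bdd_aboveI) auto
  define p where "p n = Sup (a ` {n..})" for n
  have ne: "a ` {n..} \<noteq> {}" for n by simp
  have ap: "a n \<le> p n" for n unfolding p_def using bdd by (intro cSup_upper) auto
  have p0: "0 \<le> p n" for n using a_nonneg ap order_trans by blast
  have pdec: "decseq p" unfolding decseq_def p_def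
    by (intro allI impI cSup_subset_mono[OF ne bdd]) auto
  have pm: "p (m * m) \<le> (6 * c / real m) *\<^sub>R e" if "1 \<le> m" for m
    unfolding p_def using ab[OF that] by (intro cSup_least) auto
  have bddp: "bdd_below (range p)" using p0 by (intro bdd_belowI) auto
  have inf0: "Inf (range p) = 0"
  proof (rule archimedean_zero[OF _ _ e0])
    show "0 \<le> Inf (range p)" using p0 by (intro cInf_greatest) auto
    show "0 \<le> 6 * c" using c0 by simp
    fix m :: nat assume "1 \<le> m"
    have "Inf (range p) \<le> p (m * m)" using bddp by (intro cInf_lower) auto
    then show "Inf (range p) \<le> (6 * c / real m) *\<^sub>R e" using pm[OF \<open>1 \<le> m\<close>] by simp
  qed
  have conv: "order_converges a 0"
    unfolding order_converges_def
  proof (intro exI[of _ p] conjI allI)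
    fix n
    show "riesz_abs (a n - 0) \<le> p n" using abs_of_nonneg[OF a_nonneg[of n]] ap[of n] by simp
  qed (use pdec p0 inf0 in auto)
  have "(\<lambda>n. T (riesz_abs ((1 / real n) *\<^sub>R (\<Sum>i=1..n. g i)))) = a"
    by (rule ext) (simp add: a_def S_def)
  then show ?thesis using conv gR gm by simp
qed

end
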